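(* Let $m\ge 1$ be an integer. For every integer $N\ge 0$ let $H_N=\det\left(\gamma^{(2m)}_{i+j+1-m}(t)\right)_{i,j=0}^{N-1}$ (with $H_0=1$). Then $$H_N=\begin{cases}\xi_1\, t^{m^2n(n-1)/2}, & \text{if } N=mn \text{ with } n\ge 0,\\ 0, & \text{otherwise},\end{cases}$$ where $\xi_1=(-1)^{nm(m-1)/2}$.
   Context: The Narayana polynomials are $\gamma_n(t)=\sum_{k=0}^{n}\binom{n}{k}\binom{n-1}{k}\frac{1}{k+1}t^k$ (so $\gamma_0(t)=1$), with generating function $\gamma(t,q)=\sum_{n\ge0}\gamma_n(t)q^n$. Let $G(t,q)=(\gamma(t,q)-1)/q$. For $m\ge1$ the polynomials $\gamma^{(2m)}_n(t)$ are defined by $\sum_{n\ge0}\gamma^{(2m)}_n(t)q^n=G(t,q)^m$, and $\gamma^{(2m)}_i(t)=0$ for $i<0$. Equivalently, $\gamma^{(2m)}_{n-m}(t)$ is the coefficient of $q^n$ in $(\gamma(t,q)-1)^m$. *)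

theory Defs
  imports "Jordan_Normal_Form.Determinant"
          "HOL-Computational_Algebra.Polynomial"
          "HOL-Computational_Algebra.Formal_Power_Series"
begin

(* Narayana polynomial gamma_n(t) = sum_{k=0}^n C(n,k) C(n-1,k)/(k+1) t^k, over Q[t].
   For n = 0, binom(n-1,0) = 1, so gamma_0 = 1 (nat subtraction gives 0 choose 0 = 1). *)
definition narayana :: "nat \<Rightarrow> rat poly" where
  "narayana n = (\<Sum>k\<le>n. monom (of_nat (n choose k) * of_nat ((n - 1) choose k) / of_nat (k + 1)) k)"

definition narayana_fps :: "rat poly fps" where
  "narayana_fps = Abs_fps narayana"

definition G_fps :: "rat poly fps" where
  "G_fps = fps_shift 1 (narayana_fps - 1)"

definition gamma2m :: "nat \<Rightarrow> int \<Rightarrow> rat poly" where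
  "gamma2m m i = (if i < 0 then 0 else fps_nth (G_fps ^ m) (nat i))"

definition hankel :: "nat \<Rightarrow> nat \<Rightarrow> rat poly" where
  "hankel m N = det (mat N N (\<lambda>(i, j). gamma2m m (int i + int j + 1 - int m)))"

end

theory Submission
  imports Defs "HOL-Computational_Algebra.Formal_Laurent_Series"
begin

definition Pf :: "rat \<Rightarrow> rat fps" where
  "Pf x = 1 + fps_const (1+x) * fps_X + fps_const x * fps_X^2"

definition Vs :: "rat \<Rightarrow> rat fps" where
  "Vs x = fps_inv (fps_X * inverse (Pf x))"

lemma Vs_0: "Vs x $ 0 = 0"
  by (simp add: Vs_def fps_inv_def)

lemma Pf_0: "Pf x $ 0 = 1"
  by (simp add: Pf_def)

lemma Vs_eq: "Vs x = fps_X * (1 + fps_const (1+x) * Vs x + fps_const x * (Vs x)^2)"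
proof -
  define a where "a = fps_X * inverse (Pf x)"
  define V where "V = Vs x"
  have a0: "a $ 0 = 0" by (simp add: a_def)
  have a1: "a $ 1 = 1" by (simp add: a_def Pf_0)
  have V0: "V $ 0 = 0" by (simp add: V_def Vs_0)
  have "a oo V = fps_X" unfolding V_def Vs_def a_def[symmetric]
    using a1 by (intro fps_inv_right) (simp_all add: a0)
  moreover have "a oo V = V * inverse (Pf x oo V)"
    unfolding a_def
    by (simp add: fps_compose_mult_distrib[OF V0] fps_inverse_compose[OF V0] Pf_0 V0)
  moreover have PV: "Pf x oo V = 1 + fps_const (1+x) * V + fps_const x * V^2"
    unfolding Pf_def
    by (simp add: fps_compose_add_distrib fps_const_mult_apply_left[symmetric]
         fps_compose_power[OF V0, symmetric] V0)
  ultimately have e: "V * inverse (1 + fps_const (1+x) * V + fps_const x * V^2) = fps_X" by simp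
  have q0: "(1 + fps_const (1+x) * V + fps_const x * V^2) $ 0 \<noteq> 0"
    by (simp add: V0 power2_eq_square fps_mult_nth)
  have "V = V * inverse (1 + fps_const (1+x) * V + fps_const x * V^2) * (1 + fps_const (1+x) * V + fps_const x * V^2)"
    using q0 by (simp add: mult.assoc inverse_mult_eq_1)
  also have "\<dots> = fps_X * (1 + fps_const (1+x) * V + fps_const x * V^2)" using e by simp
  finally show ?thesis unfolding V_def .
qed

definition Uf :: "rat \<Rightarrow> rat fls" where "Uf x = fps_to_fls (Vs x)"

lemma Vs_1: "fps_nth (Vs x) 1 = 1"
proof -
  have "fps_nth (Vs x) 1 = fps_nth (fps_X * (1 + fps_const (1+x) * Vs x + fps_const x * (Vs x)^2)) 1"
    using Vs_eq[of x] by simp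
  also have "\<dots> = 1" by (simp add: Vs_0 power2_eq_square fps_mult_nth)
  finally show ?thesis .
qed

lemma subdegree_Vs: "subdegree (Vs x) = 1"
  by (rule subdegreeI) (use Vs_0 Vs_1 in auto)

lemma Uf_subdegree: "fls_subdegree (Uf x) = 1"
  by (simp add: Uf_def fls_subdegree_fls_to_fps subdegree_Vs)

lemma Uf_nz: "Uf x \<noteq> 0"
  using Uf_subdegree[of x] by (metis fls_zero_subdegree zero_neq_one)

lemma Uf_eq: "Uf x = fls_X * (1 + fls_const (1+x) * Uf x + fls_const x * (Uf x)^2)"
proof -
  have "Uf x = fps_to_fls (fps_X * (1 + fps_const (1+x) * Vs x + fps_const x * (Vs x)^2))"
    unfolding Uf_def using Vs_eq[of x] by simp
  also have "\<dots> = fls_X * (1 + fls_const (1+x) * Uf x + fls_const x * (Uf x)^2)"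
    by (simp add: Uf_def fls_times_fps_to_fls fps_to_fls_power)
  finally show ?thesis .
qed

lemma fls_residue_of_nat_times: "fls_residue (of_nat n * f) = of_nat n * fls_residue (f :: rat fls)"
  using fls_residue_of_int_times(1)[of "int n" f] by simp

lemma res_Upow: "fls_residue ((Uf x)^n * fls_deriv (Uf x)) = 0"
proof -
  have d: "fls_deriv ((Uf x)^(Suc n)) = of_nat (Suc n) * ((Uf x)^n * fls_deriv (Uf x))"
    by (simp only: fls_deriv_power diff_Suc_1 mult.assoc)
  have "fls_residue (fls_deriv ((Uf x)^(Suc n))) = 0" by (rule fls_residue_deriv)
  hence "of_nat (Suc n) * fls_residue ((Uf x)^n * fls_deriv (Uf x)) = 0"
    unfolding d fls_residue_of_nat_times .
  thus ?thesis by (simp only: mult_eq_0_iff of_nat_eq_0_iff nat.simps) simp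
qed

lemma deriv_W: "fls_deriv (inverse (Uf x)) = - (inverse (Uf x) * inverse (Uf x) * fls_deriv (Uf x))"
  by (simp add: fls_inverse_deriv_divring power2_eq_square algebra_simps)

lemma res_Wpow: "fls_residue ((inverse (Uf x))^(Suc (Suc n)) * fls_deriv (Uf x)) = 0"
proof -
  define W where "W = inverse (Uf x)"
  have d: "fls_deriv (W^(Suc n)) = - (of_nat (Suc n) * (W^(Suc (Suc n)) * fls_deriv (Uf x)))"
    by (simp only: fls_deriv_power diff_Suc_1 W_def deriv_W) (simp add: algebra_simps del: of_nat_Suc)
  have r: "fls_residue (fls_deriv (W^(Suc n))) = 0" by (rule fls_residue_deriv)
  have neg: "fls_residue (- g) = - fls_residue g" for g :: "rat fls" by simp
  have "of_nat (Suc n) * fls_residue (W^(Suc (Suc n)) * fls_deriv (Uf x)) = 0"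
    using r unfolding d neg fls_residue_of_nat_times by simp
  thus ?thesis unfolding W_def by (simp only: mult_eq_0_iff of_nat_eq_0_iff nat.simps) simp
qed

lemma res_W1: "fls_residue (inverse (Uf x) * fls_deriv (Uf x)) = 1"
  using fls_residue_deriv_times_inverse_eq_subdegree(2)[of "Uf x"] by (simp add: Uf_subdegree)

lemma res_powi: "fls_residue ((Uf x) powi e * fls_deriv (Uf x)) = (if e = -1 then 1 else 0)"
proof (cases "e \<ge> 0")
  case True
  then show ?thesis using res_Upow[of x "nat e"] by (simp add: power_int_def)
next
  case False
  show ?thesis
  proof (cases "e = -1")
    case True
    then show ?thesis using res_W1[of x] by (simp add: power_int_def)
  next
    case False2: False
    define n where "n = nat (-e) - 2"
    have "nat (-e) = Suc (Suc n)" using False False2 unfolding n_def by linarith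
    then show ?thesis using res_Wpow[of x n] False False2 by (simp add: power_int_def)
  qed
qed

lemma Xinv_eq: "fls_X_inv = inverse (Uf x) * ((1 + Uf x) * (1 + fls_const x * Uf x))"
proof -
  define U where "U = Uf x"
  have U0: "U \<noteq> 0" unfolding U_def by (rule Uf_nz)
  have X0: "(fls_X :: rat fls) \<noteq> 0" by simp
  have e: "U = fls_X * ((1 + U) * (1 + fls_const x * U))"
    using Uf_eq[of x] unfolding U_def[symmetric]
    by (simp add: fls_plus_const[symmetric] algebra_simps power2_eq_square)
  have "(fls_X_inv :: rat fls) = inverse fls_X" by (rule fls_inverse_X[symmetric])
  also have "\<dots> = inverse U * ((1 + U) * (1 + fls_const x * U))"
    using U0 X0 e by (metis (no_types, lifting) divide_inverse mult.commute
        nonzero_divide_eq_eq inverse_eq_divide)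
  finally show ?thesis unfolding U_def .
qed

lemma deriv_coeff: "fls_residue (fls_X_inv ^ n * fls_deriv (Uf x)) = of_nat n * fps_nth (Vs x) n"
proof (cases n)
  case 0
  then show ?thesis by (simp add: Uf_def fls_deriv_fps_to_fls)
next
  case (Suc k)
  have "fls_residue (fls_X_inv ^ n * fls_deriv (Uf x)) = fls_nth (fls_deriv (Uf x)) (int n - 1)"
    by (simp add: fls_X_inv_power_times_conv_shift)
  also have "\<dots> = fps_nth (fps_deriv (Vs x)) k"
    by (simp add: Uf_def fls_deriv_fps_to_fls Suc)
  also have "\<dots> = of_nat n * fps_nth (Vs x) n" by (simp add: Suc)
  finally show ?thesis .
qed

lemma poly_narayana: "poly (narayana n) x =
   (\<Sum>k\<le>n. of_nat (n choose k) * of_nat ((n - 1) choose k) / of_nat (k + 1) * x ^ k)"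
  by (simp add: narayana_def poly_sum poly_monom)

lemma nar_comb:
  assumes n: "n \<ge> 1"
  shows "(\<Sum>i\<le>n. \<Sum>j\<le>n. (if int i + int j - int n = -1 then
            of_nat (n choose i) * of_nat (n choose j) * (x::rat)^j else 0))
         = of_nat n * poly (narayana n) x"
proof -
  have inner: "(\<Sum>i\<le>n. (if int i + int j - int n = -1 then
            of_nat (n choose i) * of_nat (n choose j) * (x::rat)^j else 0))
       = of_nat n * (of_nat (n choose j) * of_nat ((n - 1) choose j) / of_nat (j + 1) * x ^ j)"
    if j: "j \<le> n" for j
  proof (cases "j = n")
    case True
    have "int i + int j - int n \<noteq> -1" for i using True by simp
    then show ?thesis using True n by simp
  next
    case False
    have "(\<Sum>i\<le>n. (if int i + int j - int n = -1 then
            of_nat (n choose i) * of_nat (n choose j) * (x::rat)^j else 0))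
        = (\<Sum>i\<le>n. (if i = n - 1 - j then
            of_nat (n choose i) * of_nat (n choose j) * (x::rat)^j else 0))"
      using False j by (intro sum.cong) auto
    also have "\<dots> = of_nat (n choose (n - 1 - j)) * of_nat (n choose j) * x^j"
      by (subst sum.delta) auto
    also have "n choose (n - 1 - j) = n choose (j + 1)"
      using False j by (subst binomial_symmetric) (auto simp: Suc_diff_Suc)
    also have "(of_nat (n choose (j + 1)) :: rat) = of_nat n * of_nat ((n - 1) choose j) / of_nat (j + 1)"
    proof -
      obtain n' where n': "n = Suc n'" using n by (cases n) auto
      have "Suc n' * (n' choose j) = (Suc n' choose Suc j) * Suc j" by (rule Suc_times_binomial_eq)
      hence "(of_nat (Suc n') :: rat) * of_nat (n' choose j) = of_nat (Suc n' choose Suc j) * of_nat (Suc j)"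
        by (metis of_nat_mult)
      then show ?thesis unfolding n' by (simp add: field_simps del: of_nat_Suc)
    qed
    finally show ?thesis by simp
  qed
  have "(\<Sum>i\<le>n. \<Sum>j\<le>n. (if int i + int j - int n = -1 then
            of_nat (n choose i) * of_nat (n choose j) * (x::rat)^j else 0))
      = (\<Sum>j\<le>n. \<Sum>i\<le>n. (if int i + int j - int n = -1 then
            of_nat (n choose i) * of_nat (n choose j) * (x::rat)^j else 0))"
    by (rule sum.swap)
  also have "\<dots> = (\<Sum>j\<le>n. of_nat n * (of_nat (n choose j) * of_nat ((n - 1) choose j) / of_nat (j + 1) * x ^ j))"
    by (intro sum.cong refl inner) auto
  also have "\<dots> = of_nat n * poly (narayana n) x"
    by (simp add: poly_narayana sum_distrib_left)
  finally show ?thesis .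
qed

lemma powi_diff_nat: "(u::rat fls) \<noteq> 0 \<Longrightarrow> u powi (int a - int b) = u ^ a * inverse u ^ b"
  by (simp add: power_int_diff divide_inverse power_inverse)

lemma expand_Xinv:
  "fls_X_inv ^ n * fls_deriv (Uf x) =
   (\<Sum>i\<le>n. \<Sum>j\<le>n. fls_const (of_nat (n choose i) * of_nat (n choose j) * x^j) *
        ((Uf x) powi (int i + int j - int n) * fls_deriv (Uf x)))"
proof -
  define U where "U = Uf x"
  define D where "D = fls_deriv U"
  have U0: "U \<noteq> 0" unfolding U_def by (rule Uf_nz)
  have b1: "(1 + U)^n = (\<Sum>i\<le>n. of_nat (n choose i) * U^i)"
    using binomial_ring[of U 1 n] by (simp add: add.commute)
  have b2: "(1 + fls_const x * U)^n = (\<Sum>j\<le>n. of_nat (n choose j) * (fls_const x * U)^j)"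
    using binomial_ring[of "fls_const x * U" 1 n] by (simp add: add.commute)
  have "fls_X_inv ^ n * D = inverse U ^ n * (1 + U)^n * (1 + fls_const x * U)^n * D"
    unfolding U_def Xinv_eq[of x] by (simp add: power_mult_distrib mult.assoc)
  also have "\<dots> = (\<Sum>i\<le>n. inverse U ^ n * (of_nat (n choose i) * U^i)) *
                     (\<Sum>j\<le>n. of_nat (n choose j) * (fls_const x * U)^j) * D"
    unfolding b1 b2 by (simp only: sum_distrib_left)
  also have "\<dots> = (\<Sum>j\<le>n. \<Sum>i\<le>n. inverse U ^ n * (of_nat (n choose i) * U^i) *
                     (of_nat (n choose j) * (fls_const x * U)^j) * D)"
    by (simp only: sum_distrib_left sum_distrib_right)
  also have "\<dots> = (\<Sum>i\<le>n. \<Sum>j\<le>n. inverse U ^ n * (of_nat (n choose i) * U^i) *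
                     (of_nat (n choose j) * (fls_const x * U)^j) * D)"
    by (rule sum.swap)
  also have "\<dots> = (\<Sum>i\<le>n. \<Sum>j\<le>n. fls_const (of_nat (n choose i) * of_nat (n choose j) * x^j) *
        (U powi (int i + int j - int n) * D))"
  proof (intro sum.cong refl)
    fix i j
    have "U powi (int i + int j - int n) = U ^ (i + j) * inverse U ^ n"
      using powi_diff_nat[OF U0, of "i + j" n] by simp
    moreover have cst: "fls_const (of_nat (n choose i) * of_nat (n choose j) * x^j) =
        of_nat (n choose i) * of_nat (n choose j) * fls_const x ^ j"
      by (simp add: fls_of_nat flip: fls_const_power)
    ultimately show "inverse U ^ n * (of_nat (n choose i) * U^i) *
                     (of_nat (n choose j) * (fls_const x * U)^j) * D =
          fls_const (of_nat (n choose i) * of_nat (n choose j) * x^j) *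
        (U powi (int i + int j - int n) * D)"
      by (simp only: power_mult_distrib power_add mult_ac)
  qed
  finally show ?thesis unfolding U_def D_def .
qed

lemma Vs_coeff:
  assumes n: "n \<ge> 1"
  shows "fps_nth (Vs x) n = poly (narayana n) x"
proof -
  have "of_nat n * fps_nth (Vs x) n = fls_residue (fls_X_inv ^ n * fls_deriv (Uf x))"
    by (rule deriv_coeff[symmetric])
  also have "\<dots> = (\<Sum>i\<le>n. \<Sum>j\<le>n. (of_nat (n choose i) * of_nat (n choose j) * x^j) *
        fls_residue ((Uf x) powi (int i + int j - int n) * fls_deriv (Uf x)))"
    unfolding expand_Xinv by (simp add: fls_nth_sum)
  also have "\<dots> = (\<Sum>i\<le>n. \<Sum>j\<le>n. (if int i + int j - int n = -1 then
            of_nat (n choose i) * of_nat (n choose j) * x^j else 0))"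
    unfolding res_powi by (intro sum.cong refl) simp
  also have "\<dots> = of_nat n * poly (narayana n) x" by (rule nar_comb[OF n])
  finally show ?thesis using n by simp
qed

lemma fls_const_sum: "fls_const (sum f A) = (\<Sum>a\<in>A. fls_const (f a :: rat))"
  by (induction A rule: infinite_finite_induct) (simp_all add: fls_plus_const[symmetric])

lemma fls_const_diff: "fls_const (a - b) = fls_const a - fls_const (b :: rat)"
  by (metis diff_conv_add_uminus fls_const_uminus fls_plus_const)

lemma map_fc_mult: "map_poly fls_const (p * q) = map_poly fls_const p * map_poly fls_const (q :: rat poly)"
  by (rule poly_eqI) (simp add: coeff_map_poly coeff_mult fls_const_sum)

lemma map_fc_diff: "map_poly fls_const (p - q) = map_poly fls_const p - map_poly fls_const (q :: rat poly)"
  by (rule poly_eqI) (simp add: coeff_map_poly fls_const_diff)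

definition Ev :: "rat poly \<Rightarrow> rat fls" where
  "Ev p = poly (map_poly fls_const p) fls_X_inv"

lemma Ev_mult: "Ev (p * q) = Ev p * Ev q" by (simp add: Ev_def map_fc_mult)
lemma Ev_diff: "Ev (p - q) = Ev p - Ev q" by (simp add: Ev_def map_fc_diff)
lemma Ev_1: "Ev 1 = 1" by (simp add: Ev_def)
lemma Ev_const: "Ev [:a:] = fls_const a" by (simp add: Ev_def map_poly_pCons)
lemma Ev_lin: "Ev [:a, 1:] = fls_const a + fls_X_inv" by (simp add: Ev_def map_poly_pCons)

definition yp :: "rat \<Rightarrow> rat poly" where "yp x = [:-(1+x), 1:]"

fun pp :: "rat \<Rightarrow> nat \<Rightarrow> rat poly" where
  "pp x 0 = 1"
| "pp x (Suc 0) = yp x"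
| "pp x (Suc (Suc n)) = yp x * pp x (Suc n) - [:x:] * pp x n"

fun tt :: "rat \<Rightarrow> nat \<Rightarrow> rat poly" where
  "tt x 0 = [:2:]"
| "tt x (Suc 0) = yp x"
| "tt x (Suc (Suc n)) = yp x * tt x (Suc n) - [:x:] * tt x n"

definition rr :: "rat \<Rightarrow> nat \<Rightarrow> rat poly" where
  "rr x k = (if k = 0 then 1 else tt x k)"

lemma fc1: "fls_const (1 + x) = 1 + fls_const (x::rat)"
  by (simp add: fls_plus_const[symmetric])

lemma fc2: "fls_const (- (1 + x)) = - 1 - fls_const (x::rat)"
  by (simp only: fls_const_uminus fc1) simp

lemma Xinv_sum: "fls_X_inv = inverse (Uf x) + fls_const (1+x) + fls_const x * Uf x"
proof -
  have U0: "Uf x \<noteq> 0" by (rule Uf_nz)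
  show ?thesis unfolding Xinv_eq[of x] fc1 using U0
    by (simp add: field_simps)
qed

lemma Ev_yp: "Ev (yp x) = inverse (Uf x) + fls_const x * Uf x"
proof -
  have "Ev (yp x) = fls_const (-(1+x)) + fls_X_inv" unfolding yp_def by (rule Ev_lin)
  also have "\<dots> = inverse (Uf x) + fls_const x * Uf x"
    by (subst Xinv_sum[of x]) (simp only: fc1 fc2, simp)
  finally show ?thesis .
qed

definition rho :: "rat \<Rightarrow> nat \<Rightarrow> rat fls" where
  "rho x a = Uf x powi (- int a) - fls_const (x ^ a) * Uf x powi (int a)"

lemma powi_mult_U: "Uf x powi a * Uf x powi b = Uf x powi (a + b)"
  using power_int_add[of "Uf x" a b] Uf_nz[of x] by simp

lemma pmc: "a + b = c \<Longrightarrow> Uf x powi a * Uf x powi b = Uf x powi c"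
  using powi_mult_U by blast

lemma rho_rec: "(inverse (Uf x) + fls_const x * Uf x) * rho x (Suc n) - fls_const x * rho x n
   = rho x (Suc (Suc n))"
proof -
  define U where "U = Uf x"
  have iU: "inverse U = U powi (-1)" by simp
  have U1: "U = U powi 1" by simp
  have e1: "U powi (-1) * U powi (- int (Suc n)) = U powi (- int (Suc (Suc n)))"
    unfolding U_def by (rule pmc) simp
  have e2: "U powi (-1) * U powi (int (Suc n)) = U powi (int n)"
    unfolding U_def by (rule pmc) simp
  have e3: "U powi 1 * U powi (- int (Suc n)) = U powi (- int n)"
    unfolding U_def by (rule pmc) simp
  have e4: "U powi 1 * U powi (int (Suc n)) = U powi (int (Suc (Suc n)))"
    unfolding U_def by (rule pmc) simp
  have c: "fls_const x * fls_const (x ^ Suc n) = fls_const (x ^ Suc (Suc n))"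
    by simp
  have cn: "fls_const x * fls_const (x ^ n) = fls_const (x ^ Suc n)"
    by simp
  have "(U powi (-1) + fls_const x * U powi 1) * (U powi (- int (Suc n)) - fls_const (x ^ Suc n) * U powi (int (Suc n)))
       - fls_const x * (U powi (- int n) - fls_const (x ^ n) * U powi (int n))
     = U powi (-1) * U powi (- int (Suc n)) - fls_const (x ^ Suc n) * (U powi (-1) * U powi (int (Suc n)))
         + fls_const x * (U powi 1 * U powi (- int (Suc n))) - (fls_const x * fls_const (x ^ Suc n)) * (U powi 1 * U powi (int (Suc n)))
       - fls_const x * U powi (- int n) + (fls_const x * fls_const (x ^ n)) * U powi (int n)"
    by (simp only: algebra_simps)
  also have "\<dots> = U powi (- int (Suc (Suc n))) - fls_const (x ^ Suc (Suc n)) * U powi (int (Suc (Suc n)))"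
    unfolding e1 e2 e3 e4 c cn by (simp only: algebra_simps)
  finally have "(U powi (-1) + fls_const x * U powi 1) * (U powi (- int (Suc n)) - fls_const (x ^ Suc n) * U powi (int (Suc n)))
       - fls_const x * (U powi (- int n) - fls_const (x ^ n) * U powi (int n))
     = U powi (- int (Suc (Suc n))) - fls_const (x ^ Suc (Suc n)) * U powi (int (Suc (Suc n)))" .
  then show ?thesis unfolding rho_def U_def[symmetric] iU by (simp only: flip: U1)
qed

lemma Ev_smult: "Ev (smult a p) = fls_const a * Ev p"
  by (simp add: Ev_def map_poly_smult)

lemma pp_rho: "(inverse (Uf x) - fls_const x * Uf x) * Ev (pp x n) = rho x (Suc n)"
proof (induction n rule: pp.induct)
  case (1 x)
  then show ?case by (simp add: rho_def Ev_1 power_int_minus)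
next
  case (2 x)
  have U0: "Uf x \<noteq> 0" by (rule Uf_nz)
  have "(inverse (Uf x) - fls_const x * Uf x) * Ev (pp x (Suc 0))
     = (inverse (Uf x) + fls_const x * Uf x) * rho x 1 - fls_const x * rho x 0"
    by (simp add: Ev_yp rho_def power_int_minus algebra_simps)
  also have "\<dots> = rho x 2" using rho_rec[of x 0] by (simp add: numeral_2_eq_2)
  finally show ?case by (simp add: numeral_2_eq_2)
next
  case (3 x n)
  have h: "Ev (pp x (Suc (Suc n))) = Ev (yp x) * Ev (pp x (Suc n)) - fls_const x * Ev (pp x n)"
    by (simp add: Ev_mult Ev_diff Ev_const Ev_smult)
  have "(inverse (Uf x) - fls_const x * Uf x) * Ev (pp x (Suc (Suc n)))
     = (inverse (Uf x) + fls_const x * Uf x) * ((inverse (Uf x) - fls_const x * Uf x) * Ev (pp x (Suc n)))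
       - fls_const x * ((inverse (Uf x) - fls_const x * Uf x) * Ev (pp x n))"
    unfolding h Ev_yp by (simp only: algebra_simps)
  also have "\<dots> = rho x (Suc (Suc (Suc n)))" unfolding 3 by (rule rho_rec)
  finally show ?case .
qed

definition sig :: "rat \<Rightarrow> nat \<Rightarrow> rat fls" where
  "sig x a = Uf x powi (- int a) + fls_const (x ^ a) * Uf x powi (int a)"

lemma sig_rec: "(inverse (Uf x) + fls_const x * Uf x) * sig x (Suc n) - fls_const x * sig x n
   = sig x (Suc (Suc n))"
proof -
  define U where "U = Uf x"
  have iU: "inverse U = U powi (-1)" by simp
  have U1: "U = U powi 1" by simp
  have e1: "U powi (-1) * U powi (- int (Suc n)) = U powi (- int (Suc (Suc n)))"
    unfolding U_def by (rule pmc) simp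
  have e2: "U powi (-1) * U powi (int (Suc n)) = U powi (int n)"
    unfolding U_def by (rule pmc) simp
  have e3: "U powi 1 * U powi (- int (Suc n)) = U powi (- int n)"
    unfolding U_def by (rule pmc) simp
  have e4: "U powi 1 * U powi (int (Suc n)) = U powi (int (Suc (Suc n)))"
    unfolding U_def by (rule pmc) simp
  have c: "fls_const x * fls_const (x ^ Suc n) = fls_const (x ^ Suc (Suc n))"
    by simp
  have cn: "fls_const x * fls_const (x ^ n) = fls_const (x ^ Suc n)"
    by simp
  have "(U powi (-1) + fls_const x * U powi 1) * (U powi (- int (Suc n)) + fls_const (x ^ Suc n) * U powi (int (Suc n)))
       - fls_const x * (U powi (- int n) + fls_const (x ^ n) * U powi (int n))
     = U powi (-1) * U powi (- int (Suc n)) + fls_const (x ^ Suc n) * (U powi (-1) * U powi (int (Suc n)))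
         + fls_const x * (U powi 1 * U powi (- int (Suc n))) + (fls_const x * fls_const (x ^ Suc n)) * (U powi 1 * U powi (int (Suc n)))
       - fls_const x * U powi (- int n) - (fls_const x * fls_const (x ^ n)) * U powi (int n)"
    by (simp only: algebra_simps)
  also have "\<dots> = U powi (- int (Suc (Suc n))) + fls_const (x ^ Suc (Suc n)) * U powi (int (Suc (Suc n)))"
    unfolding e1 e2 e3 e4 c cn by (simp only: algebra_simps)
  finally have "(U powi (-1) + fls_const x * U powi 1) * (U powi (- int (Suc n)) + fls_const (x ^ Suc n) * U powi (int (Suc n)))
       - fls_const x * (U powi (- int n) + fls_const (x ^ n) * U powi (int n))
     = U powi (- int (Suc (Suc n))) + fls_const (x ^ Suc (Suc n)) * U powi (int (Suc (Suc n)))" .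
  then show ?thesis unfolding sig_def U_def[symmetric] iU by (simp only: flip: U1)
qed

lemma tt_sig: "Ev (tt x n) = sig x n"
proof (induction n rule: tt.induct)
  case (1 x)
  then show ?case by (simp add: Ev_const sig_def)
next
  case (2 x)
  then show ?case by (simp add: Ev_yp sig_def power_int_minus)
next
  case (3 x n)
  have "Ev (tt x (Suc (Suc n))) = Ev (yp x) * Ev (tt x (Suc n)) - fls_const x * Ev (tt x n)"
    by (simp add: Ev_mult Ev_diff Ev_const Ev_smult)
  also have "\<dots> = sig x (Suc (Suc n))" unfolding 3 Ev_yp by (rule sig_rec)
  finally show ?case .
qed

definition Lf :: "rat \<Rightarrow> nat \<Rightarrow> rat fls \<Rightarrow> rat" where
  "Lf x m f = fls_residue (f * fls_X_inv ^ 2 * (Uf x) ^ m)"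

lemma Lf_moment: "Lf x m (fls_X_inv ^ k) = fps_nth ((Vs x) ^ m) (k + 1)"
proof -
  have eq: "fls_X_inv ^ k * fls_X_inv ^ 2 * (Uf x) ^ m = fls_shift (int (k + 2)) ((Uf x) ^ m)"
  proof -
    have e0: "fls_X_inv ^ k * fls_X_inv ^ 2 = (fls_X_inv ^ (k+2) :: rat fls)" by (simp only: power_add)
    show ?thesis unfolding e0 by (rule fls_X_inv_power_times_conv_shift(1))
  qed
  have nk: "-1 + int (k + 2) = int (k + 1)" by simp
  have "Lf x m (fls_X_inv ^ k) = fls_nth ((Uf x) ^ m) (int (k + 1))"
    unfolding Lf_def fls_residue_def eq fls_shift_nth nk ..
  also have "\<dots> = fps_nth ((Vs x) ^ m) (k + 1)"
  proof -
    have nk2: "nat (1 + int k) = Suc k" by (metis nat_int of_nat_Suc)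
    show ?thesis unfolding Uf_def fps_to_fls_power[symmetric] by (simp add: nk2)
  qed
  finally show ?thesis .
qed

lemma Xinv_sq: "fls_X_inv ^ 2 = inverse (Uf x) * (inverse (Uf x) - fls_const x * Uf x) * fls_deriv (Uf x)"
proof -
  define U where "U = Uf x"
  have U0: "U \<noteq> 0" unfolding U_def by (rule Uf_nz)
  have "fls_deriv fls_X_inv = fls_deriv (inverse U + fls_const (1+x) + fls_const x * U)"
    unfolding U_def by (subst Xinv_sum[of x]) (rule refl)
  hence "- (fls_X_inv ^ 2) = - (inverse U * inverse U * fls_deriv U) + fls_const x * fls_deriv U"
    unfolding U_def by (simp add: deriv_W fls_deriv_mult_const_left)
  hence "fls_X_inv ^ 2 = inverse U * inverse U * fls_deriv U - fls_const x * fls_deriv U"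
    by (simp add: algebra_simps)
  also have "\<dots> = inverse U * (inverse U - fls_const x * U) * fls_deriv U"
    using U0 by (simp add: algebra_simps)
  finally show ?thesis unfolding U_def .
qed

lemma res_c: "fls_residue (fls_const c * (Uf x powi e * fls_deriv (Uf x))) = (if e = -1 then c else 0)"
  using res_powi[of x e] by simp

definition Mf :: "rat \<Rightarrow> nat \<Rightarrow> nat \<Rightarrow> nat \<Rightarrow> rat" where
  "Mf x m a k = (if k = 0 then (if a = m then 1 else 0) else
     (if a + k = m then 1 else 0) + (if a = k + m then x ^ k else 0) - (if k = a + m then x ^ a else 0))"

lemma res_lin:
  "fls_residue ((fls_const c1 * Uf x powi e1 + fls_const c2 * Uf x powi e2
     - fls_const c3 * Uf x powi e3 - fls_const c4 * Uf x powi e4) * fls_deriv (Uf x))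
   = (if e1 = -1 then c1 else 0) + (if e2 = -1 then c2 else 0) - (if e3 = -1 then c3 else 0)
     - (if e4 = -1 then c4 else 0)"
proof -
  have "(fls_const c1 * Uf x powi e1 + fls_const c2 * Uf x powi e2
     - fls_const c3 * Uf x powi e3 - fls_const c4 * Uf x powi e4) * fls_deriv (Uf x)
    = fls_const c1 * (Uf x powi e1 * fls_deriv (Uf x)) + fls_const c2 * (Uf x powi e2 * fls_deriv (Uf x))
     - fls_const c3 * (Uf x powi e3 * fls_deriv (Uf x)) - fls_const c4 * (Uf x powi e4 * fls_deriv (Uf x))"
    by (simp only: algebra_simps)
  moreover have "fls_residue (a + b - c - d) = fls_residue a + fls_residue b - fls_residue c - fls_residue d"
    for a b c d :: "rat fls" by simp
  ultimately show ?thesis by (simp only: res_c)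
qed

lemma entry_main:
  "Lf x m (Ev (pp x i) * f) = fls_residue (rho x (Suc i) * f * Uf x powi (int m - 1) * fls_deriv (Uf x))"
proof -
  define U where "U = Uf x"
  have U0: "U \<noteq> 0" unfolding U_def by (rule Uf_nz)
  have Wm: "inverse U * U ^ m = U powi (int m - 1)"
    using U0 by (simp add: power_int_diff power_int_minus divide_inverse mult.commute)
  have "Ev (pp x i) * f * fls_X_inv ^ 2 * U ^ m
     = ((inverse U - fls_const x * U) * Ev (pp x i)) * f * (inverse U * U ^ m) * fls_deriv U"
    unfolding U_def Xinv_sq[of x] by (simp only: mult_ac)
  hence "Ev (pp x i) * f * fls_X_inv ^ 2 * Uf x ^ m = rho x (Suc i) * f * Uf x powi (int m - 1) * fls_deriv (Uf x)"
    unfolding U_def pp_rho Wm[unfolded U_def] .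
  thus ?thesis unfolding Lf_def by (simp only:)
qed

lemma entry:
  assumes m: "m \<ge> 1"
  shows "Lf x m (Ev (pp x i) * Ev (rr x k)) = Mf x m (Suc i) k"
proof -
  define U where "U = Uf x"
  define a where "a = Suc i"
  show ?thesis
  proof (cases "k = 0")
    case True
    have p1: "U powi (- int a) * U powi (int m - 1) = U powi (int m - 1 - int a)"
      unfolding U_def by (rule pmc) simp
    have p2: "U powi (int a) * U powi (int m - 1) = U powi (int m - 1 + int a)"
      unfolding U_def by (rule pmc) simp
    have "rho x a * Ev (rr x k) * U powi (int m - 1) =
       U powi (- int a) * U powi (int m - 1) - fls_const (x ^ a) * (U powi (int a) * U powi (int m - 1))"
    proof -
      have rk: "Ev (rr x k) = 1" using True by (simp add: rr_def Ev_1)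
      show ?thesis unfolding rk rho_def U_def[symmetric] by (simp only: mult_1_right mult_1_left algebra_simps)
    qed
    also have "\<dots> = fls_const 1 * U powi (int m - 1 - int a) + fls_const 0 * U powi 0
       - fls_const (x ^ a) * U powi (int m - 1 + int a) - fls_const 0 * U powi 0"
      unfolding p1 p2 by simp
    finally have "Lf x m (Ev (pp x i) * Ev (rr x k)) = (if int m - 1 - int a = -1 then 1 else 0) + (if (0::int) = -1 then 0 else 0)
        - (if int m - 1 + int a = -1 then x ^ a else 0) - (if (0::int) = -1 then 0 else 0)"
      unfolding entry_main a_def[symmetric] U_def by (simp only: res_lin)
    then show ?thesis unfolding Mf_def a_def using True m by auto
  next
    case False
    have p1: "U powi (- int a) * U powi (- int k) * U powi (int m - 1) = U powi (int m - 1 - int a - int k)"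
      unfolding U_def by (simp only: powi_mult_U) (rule arg_cong[where f = "power_int (Uf x)"], simp)
    have p2: "U powi (- int a) * U powi (int k) * U powi (int m - 1) = U powi (int m - 1 - int a + int k)"
      unfolding U_def by (simp only: powi_mult_U) (rule arg_cong[where f = "power_int (Uf x)"], simp)
    have p3: "U powi (int a) * U powi (- int k) * U powi (int m - 1) = U powi (int m - 1 + int a - int k)"
      unfolding U_def by (simp only: powi_mult_U) (rule arg_cong[where f = "power_int (Uf x)"], simp)
    have p4: "U powi (int a) * U powi (int k) * U powi (int m - 1) = U powi (int m - 1 + int a + int k)"
      unfolding U_def by (simp only: powi_mult_U) (rule arg_cong[where f = "power_int (Uf x)"], simp)
    have c4: "fls_const (x ^ a) * fls_const (x ^ k) = fls_const (x ^ (a + k))"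
      by (simp add: power_add)
    have "rho x a * Ev (rr x k) * U powi (int m - 1) =
       (U powi (- int a) - fls_const (x ^ a) * U powi (int a)) *
       (U powi (- int k) + fls_const (x ^ k) * U powi (int k)) * U powi (int m - 1)"
      unfolding rho_def rr_def U_def[symmetric] using False
      by (simp only: tt_sig sig_def U_def[symmetric] if_False)
    also have "\<dots> = fls_const 1 * (U powi (- int a) * U powi (- int k) * U powi (int m - 1))
       + fls_const (x ^ k) * (U powi (- int a) * U powi (int k) * U powi (int m - 1))
       - fls_const (x ^ a) * (U powi (int a) * U powi (- int k) * U powi (int m - 1))
       - (fls_const (x ^ a) * fls_const (x ^ k)) * (U powi (int a) * U powi (int k) * U powi (int m - 1))"
      by (simp only: algebra_simps fls_const_1 mult_1_left)
    also have "\<dots> = fls_const 1 * U powi (int m - 1 - int a - int k) + fls_const (x ^ k) * U powi (int m - 1 - int a + int k)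
       - fls_const (x ^ a) * U powi (int m - 1 + int a - int k) - fls_const (x ^ (a + k)) * U powi (int m - 1 + int a + int k)"
      unfolding p1 p2 p3 p4 c4 ..
    finally have "Lf x m (Ev (pp x i) * Ev (rr x k)) = (if int m - 1 - int a - int k = -1 then 1 else 0)
        + (if int m - 1 - int a + int k = -1 then x ^ k else 0)
        - (if int m - 1 + int a - int k = -1 then x ^ a else 0)
        - (if int m - 1 + int a + int k = -1 then x ^ (a + k) else 0)"
      unfolding entry_main a_def[symmetric] U_def by (simp only: res_lin)
    then show ?thesis unfolding Mf_def a_def using False m by auto
  qed
qed

definition Cf :: "rat \<Rightarrow> nat \<Rightarrow> nat \<Rightarrow> nat \<Rightarrow> rat" where
  "Cf x m j k = (if j \<le> k \<and> (2*m) dvd (k - j) then x ^ ((k - j) div (2*m) * m) else 0)"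

definition dst :: "nat \<Rightarrow> nat \<Rightarrow> nat" where
  "dst m a = (if a \<le> m then m - a else a - m)"

definition ee :: "rat \<Rightarrow> nat \<Rightarrow> nat \<Rightarrow> rat" where
  "ee x m a = (if a \<le> m then 1 else x ^ (a - m))"

lemma Mf_alt:
  assumes "a \<ge> 1"
  shows "Mf x m a j = (if j = dst m a then ee x m a else 0) - (if j = a + m then x ^ a else 0)"
  using assms unfolding Mf_def dst_def ee_def by auto

lemma Mprime_entry:
  assumes i: "i < N" and k: "k < N"
  shows "(mat N N (\<lambda>(i,j). Mf x m (Suc i) j) * mat N N (\<lambda>(j,k). Cf x m j k)) $$ (i,k)
     = ee x m (Suc i) * Cf x m (dst m (Suc i)) k - x ^ (Suc i) * Cf x m (Suc i + m) k"
proof -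
  have Cz: "Cf x m j k = 0" if "j \<ge> N" for j using that k unfolding Cf_def by auto
  have "(mat N N (\<lambda>(i,j). Mf x m (Suc i) j) * mat N N (\<lambda>(j,k). Cf x m j k)) $$ (i,k)
      = (\<Sum>j<N. Mf x m (Suc i) j * Cf x m j k)"
    using i k by (simp add: scalar_prod_def lessThan_atLeast0)
  also have "\<dots> = (\<Sum>j<N. (if j = dst m (Suc i) then ee x m (Suc i) * Cf x m j k else 0))
                 - (\<Sum>j<N. (if j = Suc i + m then x ^ (Suc i) * Cf x m j k else 0))"
    unfolding sum_subtractf[symmetric] by (intro sum.cong refl) (simp add: Mf_alt left_diff_distrib)
  also have "\<dots> = ee x m (Suc i) * Cf x m (dst m (Suc i)) k - x ^ (Suc i) * Cf x m (Suc i + m) k"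
    using Cz by (simp add: sum.delta)
  finally show ?thesis .
qed

lemma Mprime_high:
  assumes m: "m \<ge> 1" and a: "a \<ge> m"
  shows "ee x m a * Cf x m (dst m a) k - x ^ a * Cf x m (a + m) k = (if k = a - m then x ^ (a - m) else 0)"
proof -
  have d: "dst m a = a - m" and e: "ee x m a = x ^ (a - m)" using a unfolding dst_def ee_def by auto
  show ?thesis
  proof (cases "a + m \<le> k \<and> (2*m) dvd (k - (a + m))")
    case True
    then obtain q where q: "k - (a + m) = 2*m*q" by (auto elim: dvdE)
    have k1: "k - (a - m) = 2*m*(q+1)" using q True a by (simp add: algebra_simps)
    have "Cf x m (a - m) k = x ^ ((q+1) * m)" using k1 m True unfolding Cf_def by auto
    moreover have "Cf x m (a + m) k = x ^ (q * m)" using q m True unfolding Cf_def by auto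
    moreover have "k \<noteq> a - m" using True m by auto
    moreover have "m + (a - m + m * q) = a + m * q" using a by simp
    ultimately show ?thesis unfolding d e
      by (simp add: power_add[symmetric] algebra_simps)
  next
    case False
    have C2: "Cf x m (a + m) k = 0" using False unfolding Cf_def by auto
    have C1: "Cf x m (a - m) k = (if k = a - m then 1 else 0)"
    proof (cases "k = a - m")
      case True then show ?thesis unfolding Cf_def by simp
    next
      case ne: False
      show ?thesis
      proof (cases "a - m \<le> k \<and> (2*m) dvd (k - (a - m))")
        case True
        then obtain q where q: "k - (a - m) = 2*m*q" by (auto elim: dvdE)
        have "q \<noteq> 0" using q ne True by (metis diff_is_0_eq le_antisym mult_0_right)
        hence "a + m \<le> k \<and> k - (a + m) = 2*m*(q - 1)"
          using q True a by (cases q) (auto simp: algebra_simps)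
        hence False using False by auto
        then show ?thesis ..
      next
        case False
        then show ?thesis using ne unfolding Cf_def by auto
      qed
    qed
    show ?thesis unfolding d e C1 C2 by simp
  qed
qed

lemma det_diag:
  "det (mat n n (\<lambda>(i,j). if i = j then f i else 0)) = (\<Prod>i<n. (f i :: 'a :: comm_ring_1))"
proof -
  have "det (mat n n (\<lambda>(i,j). if i = j then f i else 0)) =
        prod_list (diag_mat (mat n n (\<lambda>(i,j). if i = j then f i else 0)))"
    by (rule det_upper_triangular) (auto simp: upper_triangular_def)
  also have "\<dots> = (\<Prod>i<n. f i)"
    unfolding prod_list_diag_prod by (simp add: lessThan_atLeast0)
  finally show ?thesis .
qed

lemma det_antidiag:
  "det (mat n n (\<lambda>(i,j). if i + j + 1 = n then c else 0)) = (-1) ^ (n * (n - 1) div 2) * (c :: 'a :: idom) ^ n"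
proof (induction n)
  case 0
  then show ?case by simp
next
  case (Suc n)
  define A where "A = mat (Suc n) (Suc n) (\<lambda>(i,j). if i + j + 1 = Suc n then c else 0)"
  have A: "A \<in> carrier_mat (n + 1) (n + 1)" unfolding A_def by simp
  have "det A = (-1)^(n * 1) * det (mat (n + 1) (n + 1) (\<lambda>(i,j). A $$ ((if i < n then i + 1 else i - n), j)))"
    by (rule det_swap_rows[OF A])
  also have "mat (n + 1) (n + 1) (\<lambda>(i,j). A $$ ((if i < n then i + 1 else i - n), j))
     = four_block_mat (mat n n (\<lambda>(i,j). if i + j + 1 = n then c else 0)) (0\<^sub>m n 1) (0\<^sub>m 1 n) (mat 1 1 (\<lambda>_. c))"
    by (rule eq_matI) (auto simp: A_def)
  also have "det \<dots> = det (mat n n (\<lambda>(i,j). if i + j + 1 = n then c else 0)) * det (mat 1 1 (\<lambda>_. c))"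
    by (rule det_four_block_mat_lower_left_zero) auto
  also have "det (mat 1 1 (\<lambda>_. c)) = c"
  proof -
    have "mat 1 1 (\<lambda>_. c) = mat 1 1 (\<lambda>(i,j). if i = j then c else 0)"
      by (rule eq_matI) auto
    then show ?thesis using det_diag[of 1 "\<lambda>_. c"] by simp
  qed
  finally have "det A = (-1)^n * ((-1) ^ (n * (n - 1) div 2) * c ^ n) * c" using Suc by simp
  also have "\<dots> = (-1) ^ (Suc n * (Suc n - 1) div 2) * c ^ Suc n"
  proof -
    have "Suc n * (Suc n - 1) div 2 = n + n * (n - 1) div 2"
      by (cases n) (auto simp: algebra_simps)
    then show ?thesis by (simp add: power_add)
  qed
  finally show ?case unfolding A_def .
qed

definition Mpf :: "rat \<Rightarrow> nat \<Rightarrow> nat \<Rightarrow> nat \<Rightarrow> rat" where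
  "Mpf x m i k = (if m \<le> Suc i then (if k = Suc i - m then x ^ (Suc i - m) else 0)
     else Cf x m (m - Suc i) k - x ^ Suc i * Cf x m (Suc i + m) k)"

lemma MC_eq:
  assumes m: "m \<ge> 1"
  shows "mat N N (\<lambda>(i,j). Mf x m (Suc i) j) * mat N N (\<lambda>(j,k). Cf x m j k) = mat N N (\<lambda>(i,k). Mpf x m i k)"
proof (rule eq_matI)
  fix i k assume i: "i < dim_row (mat N N (\<lambda>(i,k). Mpf x m i k))" and k: "k < dim_col (mat N N (\<lambda>(i,k). Mpf x m i k))"
  hence i: "i < N" and k: "k < N" by auto
  show "(mat N N (\<lambda>(i,j). Mf x m (Suc i) j) * mat N N (\<lambda>(j,k). Cf x m j k)) $$ (i,k) = mat N N (\<lambda>(i,k). Mpf x m i k) $$ (i,k)"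
  proof (cases "m \<le> Suc i")
    case True
    then show ?thesis unfolding Mprime_entry[OF i k] using Mprime_high[OF m True, of x k] i k
      by (simp add: Mpf_def)
  next
    case False
    then show ?thesis unfolding Mprime_entry[OF i k] using i k
      by (simp add: Mpf_def dst_def ee_def)
  qed
qed auto

lemma det_C: "det (mat N N (\<lambda>(j,k). Cf x m j k)) = 1"
proof -
  have "det (mat N N (\<lambda>(j,k). Cf x m j k)) = prod_list (diag_mat (mat N N (\<lambda>(j,k). Cf x m j k)))"
    by (rule det_upper_triangular) (auto simp: upper_triangular_def Cf_def)
  also have "\<dots> = 1" unfolding prod_list_diag_prod by (simp add: Cf_def)
  finally show ?thesis .
qed

lemma det_Mpf_block:
  assumes m: "m \<ge> 1" and mN: "m \<le> N"
  shows "det (mat N N (\<lambda>(i,k). Mpf x m i k)) =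
    (-1) ^ ((m - 1) * (N - m + 1)) * det (mat (m - 1) (m - 1) (\<lambda>(i,j). Mpf x m i (j + (N - m + 1))))
      * (\<Prod>i<N - m + 1. x ^ i)"
proof -
  define p where "p = m - 1"
  define d where "d = N - m + 1"
  have N: "N = p + d" unfolding p_def d_def using m mN by simp
  define A where "A = mat N N (\<lambda>(i,k). Mpf x m i k)"
  have A: "A \<in> carrier_mat (p + d) (p + d)" unfolding A_def N by simp
  have "det A = (-1)^(p * d) * det (mat (p + d) (p + d) (\<lambda>(i,j). A $$ (i, if j < p then j + d else j - p)))"
    by (rule det_swap_cols[OF A])
  also have "mat (p + d) (p + d) (\<lambda>(i,j). A $$ (i, if j < p then j + d else j - p)) =
     four_block_mat (mat p p (\<lambda>(i,j). Mpf x m i (j + d))) (mat p d (\<lambda>(i,j). Mpf x m i j))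
       (0\<^sub>m d p) (mat d d (\<lambda>(i,j). if i = j then x ^ i else 0))"
  proof (rule eq_matI)
    fix i j assume i: "i < dim_row (four_block_mat (mat p p (\<lambda>(i,j). Mpf x m i (j + d))) (mat p d (\<lambda>(i,j). Mpf x m i j))
       (0\<^sub>m d p) (mat d d (\<lambda>(i,j). if i = j then x ^ i else 0)))"
      and j: "j < dim_col (four_block_mat (mat p p (\<lambda>(i,j). Mpf x m i (j + d))) (mat p d (\<lambda>(i,j). Mpf x m i j))
       (0\<^sub>m d p) (mat d d (\<lambda>(i,j). if i = j then x ^ i else 0)))"
    hence i: "i < p + d" and j: "j < p + d" by auto
    show "mat (p + d) (p + d) (\<lambda>(i,j). A $$ (i, if j < p then j + d else j - p)) $$ (i, j) =
      four_block_mat (mat p p (\<lambda>(i,j). Mpf x m i (j + d))) (mat p d (\<lambda>(i,j). Mpf x m i j))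
       (0\<^sub>m d p) (mat d d (\<lambda>(i,j). if i = j then x ^ i else 0)) $$ (i, j)"
    proof -
      have mp: "m = Suc p" unfolding p_def using m by simp
      have L: "mat (p + d) (p + d) (\<lambda>(i,j). A $$ (i, if j < p then j + d else j - p)) $$ (i, j)
          = Mpf x m i (if j < p then j + d else j - p)"
        using i j unfolding A_def N by auto
      show ?thesis
      proof (cases "i < p")
        case True
        then show ?thesis unfolding L using i j by (cases "j < p") auto
      next
        case False
        have ms: "m \<le> Suc i" "Suc i - m = i - p" using False mp by auto
        show ?thesis
        proof (cases "j < p")
          case True
          have "j + d \<noteq> i - p" using i False by linarith
          then show ?thesis unfolding L using i j True False by (simp add: Mpf_def ms)
        next
          case False2: False
          have "(j - p = i - p) = (i - p = j - p)" by auto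
          then show ?thesis unfolding L using i j False False2 by (simp add: Mpf_def ms)
        qed
      qed
    qed
  qed auto
  also have "det (four_block_mat (mat p p (\<lambda>(i,j). Mpf x m i (j + d))) (mat p d (\<lambda>(i,j). Mpf x m i j))
       (0\<^sub>m d p) (mat d d (\<lambda>(i,j). if i = j then x ^ i else 0))) =
     det (mat p p (\<lambda>(i,j). Mpf x m i (j + d))) * det (mat d d (\<lambda>(i,j). if i = j then x ^ i else 0))"
    by (rule det_four_block_mat_lower_left_zero) auto
  also have "det (mat d d (\<lambda>(i,j). if i = j then x ^ i else 0)) = (\<Prod>i<d. x ^ i)"
    by (rule det_diag)
  finally show ?thesis unfolding A_def p_def d_def by (simp add: mult.assoc)
qed

lemma ndvd1: "0 < s \<Longrightarrow> s < D \<Longrightarrow> \<not> D dvd (D * t + (s::nat))"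
  by (metis dvd_add_right_iff dvd_imp_le dvd_triv_left not_le)

lemma ndvd2: "0 < s \<Longrightarrow> s < D \<Longrightarrow> s \<le> D * t \<Longrightarrow> \<not> D dvd (D * t - (s::nat))"
proof
  assume s: "0 < s" "s < D" "s \<le> D * t" and d: "D dvd (D * t - s)"
  have "t \<ge> 1" using s by (cases t) auto
  hence "D * t - s = D * (t - 1) + (D - s)" using s by (cases t) (auto simp: algebra_simps)
  with d ndvd1[of "D - s" D "t - 1"] s show False by auto
qed

lemma Y_even:
  assumes m: "m \<ge> 1" and h: "h \<ge> 1" and N: "N = 2 * m * h" and i: "i < m - 1" and j: "j < m - 1"
  shows "Mpf x m i (j + (N - m + 1)) = (if i = j then - (x ^ Suc i * x ^ ((h - 1) * m)) else 0)"
proof -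
  define T where "T = 2 * m * (h - 1)"
  have NT: "N = T + 2 * m" unfolding T_def N using h by (cases h) (auto simp: algebra_simps)
  define k where "k = j + (N - m + 1)"
  have kT: "k = T + (m + j + 1)" unfolding k_def NT by simp
  have low: "\<not> m \<le> Suc i" using i by simp
  have C1: "Cf x m (m - Suc i) k = 0"
  proof -
    have "k - (m - Suc i) = 2 * m * (h - 1) + (i + j + 2)" using kT i unfolding T_def by simp
    moreover have "\<not> (2 * m) dvd (2 * m * (h - 1) + (i + j + 2))" by (rule ndvd1) (use i j in auto)
    ultimately show ?thesis unfolding Cf_def by auto
  qed
  have C2: "Cf x m (Suc i + m) k = (if i = j then x ^ ((h - 1) * m) else 0)"
  proof (cases "i = j")
    case True
    have "k - (Suc i + m) = 2 * m * (h - 1)" using kT True unfolding T_def by simp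
    moreover have "Suc i + m \<le> k" using kT True by simp
    ultimately show ?thesis using True m unfolding Cf_def by simp
  next
    case False
    show ?thesis
    proof (cases "i < j")
      case True
      have "k - (Suc i + m) = 2 * m * (h - 1) + (j - i)" using kT True unfolding T_def by simp
      moreover have "\<not> (2 * m) dvd (2 * m * (h - 1) + (j - i))" by (rule ndvd1) (use True j in auto)
      ultimately show ?thesis using False unfolding Cf_def by auto
    next
      case False2: False
      show ?thesis
      proof (cases "Suc i + m \<le> k")
        case True
        have "k - (Suc i + m) = 2 * m * (h - 1) - (i - j)" using kT False False2 True unfolding T_def by simp
        moreover have "\<not> (2 * m) dvd (2 * m * (h - 1) - (i - j))"
          by (rule ndvd2) (use False False2 i True kT in \<open>auto simp: T_def\<close>)
        ultimately show ?thesis using False unfolding Cf_def by auto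
      next
        case False3: False
        then show ?thesis using False unfolding Cf_def by auto
      qed
    qed
  qed
  show ?thesis unfolding Mpf_def k_def[symmetric] using low C1 C2 by simp
qed

lemma Y_odd:
  assumes m: "m \<ge> 1" and N: "N = 2 * m * h + m" and i: "i < m - 1" and j: "j < m - 1"
  shows "Mpf x m i (j + (N - m + 1)) = (if i + j + 2 = m then x ^ (h * m) else 0)"
proof -
  define k where "k = j + (N - m + 1)"
  have kT: "k = 2 * m * h + (j + 1)" unfolding k_def N by simp
  have low: "\<not> m \<le> Suc i" using i by simp
  have C1: "Cf x m (m - Suc i) k = (if i + j + 2 = m then x ^ (h * m) else 0)"
  proof (cases "i + j + 2 = m")
    case True
    have "k - (m - Suc i) = 2 * m * h" "m - Suc i \<le> k" using kT True by auto
    then show ?thesis using True m unfolding Cf_def by simp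
  next
    case False
    show ?thesis
    proof (cases "i + j + 2 > m")
      case True
      have "k - (m - Suc i) = 2 * m * h + (i + j + 2 - m)" using kT True i by arith
      moreover have "\<not> (2 * m) dvd (2 * m * h + (i + j + 2 - m))" by (rule ndvd1) (use True i j in auto)
      ultimately show ?thesis using False unfolding Cf_def by auto
    next
      case False2: False
      show ?thesis
      proof (cases "m - Suc i \<le> k")
        case True
        have "k - (m - Suc i) = 2 * m * h - (m - i - j - 2)" using kT False False2 True by simp
        moreover have "\<not> (2 * m) dvd (2 * m * h - (m - i - j - 2))"
          by (rule ndvd2) (use False False2 True kT in auto)
        ultimately show ?thesis using False unfolding Cf_def by auto
      next
        case False3: False
        then show ?thesis using False unfolding Cf_def by auto
      qed
    qed
  qed
  have C2: "Cf x m (Suc i + m) k = 0"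
  proof (cases "Suc i + m \<le> k")
    case True
    have "k - (Suc i + m) = 2 * m * h - (i + m - j)" using kT True i j by simp
    moreover have "\<not> (2 * m) dvd (2 * m * h - (i + m - j))"
      by (rule ndvd2) (use True kT i j in auto)
    ultimately show ?thesis unfolding Cf_def by auto
  next
    case False
    then show ?thesis unfolding Cf_def by auto
  qed
  show ?thesis unfolding Mpf_def k_def[symmetric] using low C1 C2 by simp
qed

lemma det_zero_case:
  assumes m: "m \<ge> 1" and nd: "\<not> m dvd N"
  shows "det (mat N N (\<lambda>(i,k). Mpf x m i k)) = 0"
proof -
  define k0 where "k0 = m * (N div m)"
  have dm: "m * (N div m) + N mod m = N" by (rule mult_div_mod_eq)
  have r1: "N mod m \<noteq> 0" using nd by (simp add: dvd_eq_mod_eq_0)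
  have r2: "N mod m < m" using m by simp
  have k0N: "k0 < N" unfolding k0_def using dm r1 by linarith
  have k0N2: "N < k0 + m" unfolding k0_def using dm r2 by linarith
  have mk0: "m dvd k0" unfolding k0_def by simp
  have zero: "Mpf x m i k0 = 0" if i: "i < N" for i
  proof (cases "m \<le> Suc i")
    case True
    have "k0 \<noteq> Suc i - m" using True i k0N2 by linarith
    then show ?thesis using True unfolding Mpf_def by simp
  next
    case False
    have c1: "Cf x m (m - Suc i) k0 = 0"
    proof (rule ccontr)
      assume "Cf x m (m - Suc i) k0 \<noteq> 0"
      hence le: "m - Suc i \<le> k0" and dv: "(2*m) dvd (k0 - (m - Suc i))" unfolding Cf_def by (auto split: if_splits)
      hence "m dvd (k0 - (m - Suc i))" by (meson dvd_mult_right)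
      hence "m dvd (k0 - (k0 - (m - Suc i)))" using mk0 by (rule dvd_diff_nat[rotated])
      hence "m dvd (m - Suc i)" using le by simp
      thus False using False by (auto dest: dvd_imp_le)
    qed
    have c2: "Cf x m (Suc i + m) k0 = 0"
    proof (rule ccontr)
      assume "Cf x m (Suc i + m) k0 \<noteq> 0"
      hence le: "Suc i + m \<le> k0" and dv: "(2*m) dvd (k0 - (Suc i + m))" unfolding Cf_def by (auto split: if_splits)
      hence "m dvd (k0 - (Suc i + m))" by (meson dvd_mult_right)
      hence "m dvd (k0 - (k0 - (Suc i + m)))" using mk0 by (rule dvd_diff_nat[rotated])
      hence "m dvd (Suc i + m)" using le by simp
      hence "m dvd Suc i" by (metis add.commute dvd_add_triv_left_iff)
      thus False using False by (auto dest: dvd_imp_le)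
    qed
    show ?thesis using False c1 c2 unfolding Mpf_def by simp
  qed
  define A where "A = mat N N (\<lambda>(i,k). Mpf x m i k)"
  have A: "A \<in> carrier_mat N N" unfolding A_def by simp
  have "A *\<^sub>v unit_vec N k0 = 0\<^sub>v N"
  proof (rule eq_vecI)
    fix i assume "i < dim_vec (0\<^sub>v N :: rat vec)"
    hence i: "i < N" by simp
    have "(A *\<^sub>v unit_vec N k0) $ i = (\<Sum>ia = 0..<N. Mpf x m i ia * (if ia = k0 then 1 else 0))"
      using i by (simp add: A_def scalar_prod_def unit_vec_def)
    also have "\<dots> = (\<Sum>ia = 0..<N. if ia = k0 then Mpf x m i ia else 0)" by (rule sum.cong) auto
    also have "\<dots> = 0" using k0N zero[OF i] by (simp add: sum.delta)
    finally show "(A *\<^sub>v unit_vec N k0) $ i = (0\<^sub>v N :: rat vec) $ i" using i by simp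
  qed (simp add: A_def)
  moreover have "unit_vec N k0 \<noteq> (0\<^sub>v N :: rat vec)" using k0N by simp
  ultimately have "det A = 0" unfolding det_0_iff_vec_prod_zero[OF A] by (intro exI[of _ "unit_vec N k0"]) auto
  thus ?thesis unfolding A_def .
qed

lemma sum2: "2 * (\<Sum>i<n. i) = n * (n - 1 :: nat)"
  by (induction n) (auto simp: algebra_simps)

lemma prod_pow: "(\<Prod>i<n. (x::rat) ^ i) = x ^ (\<Sum>i<n. i)"
  by (simp add: power_sum)

lemma neg1_pow: "(-1::rat) ^ a = (if even a then 1 else -1)"
  by simp

lemma det_M_main:
  assumes m: "m \<ge> 1"
  shows "det (mat N N (\<lambda>(i,j). Mf x m (Suc i) j)) =
    (if m dvd N then (let n = N div m in (-1) ^ (n * m * (m - 1) div 2) * x ^ (m\<^sup>2 * n * (n - 1) div 2)) else 0)"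
proof -
  have "det (mat N N (\<lambda>(i,j). Mf x m (Suc i) j)) =
        det (mat N N (\<lambda>(i,j). Mf x m (Suc i) j)) * det (mat N N (\<lambda>(j,k). Cf x m j k))"
    by (simp add: det_C)
  also have "\<dots> = det (mat N N (\<lambda>(i,j). Mf x m (Suc i) j) * mat N N (\<lambda>(j,k). Cf x m j k))"
    by (rule det_mult[symmetric]) auto
  also have "\<dots> = det (mat N N (\<lambda>(i,k). Mpf x m i k))" by (simp add: MC_eq[OF m])
  finally have dM: "det (mat N N (\<lambda>(i,j). Mf x m (Suc i) j)) = det (mat N N (\<lambda>(i,k). Mpf x m i k))" .
  show ?thesis
  proof (cases "m dvd N")
    case False
    then show ?thesis unfolding dM using det_zero_case[OF m False] by simp
  next
    case mdvd: True
    then obtain n where N: "N = m * n" by (auto elim: dvdE)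
    have nd: "N div m = n" using m N by simp
    obtain p where mp: "m = Suc p" using m by (cases m) auto
    show ?thesis
    proof (cases "n = 0")
      case True
      then show ?thesis unfolding dM using N by simp
    next
      case False
      have mN: "m \<le> N" using False N by simp
      have blk: "det (mat N N (\<lambda>(i,k). Mpf x m i k)) =
          (-1) ^ ((m - 1) * (N - m + 1)) * det (mat (m - 1) (m - 1) (\<lambda>(i,j). Mpf x m i (j + (N - m + 1))))
          * x ^ (\<Sum>i<N - m + 1. i)"
        using det_Mpf_block[OF m mN, of x] by (simp only: prod_pow)
      show ?thesis
      proof (cases "even n")
        case True
        then obtain h where n2: "n = 2 * h" by (auto elim: evenE)
        have h: "h \<ge> 1" using False n2 by simp
        then obtain g where hg: "h = Suc g" by (cases h) auto
        have N2: "N = 2 * m * h" using N n2 by simp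
        have Y: "mat (m - 1) (m - 1) (\<lambda>(i,j). Mpf x m i (j + (N - m + 1))) =
           mat (m - 1) (m - 1) (\<lambda>(i,j). if i = j then - (x ^ Suc i * x ^ ((h - 1) * m)) else 0)"
          by (rule eq_matI) (use Y_even[OF m h N2] in auto)
        have dY: "det (mat (m - 1) (m - 1) (\<lambda>(i,j). Mpf x m i (j + (N - m + 1)))) =
            (-1) ^ p * x ^ ((\<Sum>i<p. i) + p + p * ((h - 1) * m))"
        proof -
          have pm1: "m - 1 = p" unfolding mp by simp
          define c where "c = (h - 1) * m"
          have "(\<Prod>i<p. - (x ^ Suc i * x ^ c)) = (\<Prod>i<p. (-1) * x ^ (Suc i + c))"
            by (simp only: power_add mult_minus1)
          also have "\<dots> = (-1)^p * (\<Prod>i<p. x ^ (Suc i + c))" by (simp only: prod.distrib prod_constant card_lessThan)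
          also have "(\<Prod>i<p. x ^ (Suc i + c)) = x ^ (\<Sum>i<p. Suc i + c)" by (simp add: power_sum)
          also have "(\<Sum>i<p. Suc i + c) = (\<Sum>i<p. i) + p + p * c"
            by (induction p) auto
          finally have P: "(\<Prod>i<p. - (x ^ Suc i * x ^ c)) = (-1) ^ p * x ^ ((\<Sum>i<p. i) + p + p * c)" .
          show ?thesis unfolding Y unfolding det_diag pm1 using P unfolding c_def .
        qed
        have d: "N - m + 1 = Suc p * (2 * g + 1) + 1" unfolding N2 mp hg by (simp add: algebra_simps)
        define S where "S n = (\<Sum>i<n. i)" for n :: nat
        have Sd: "2 * S (N - m + 1) = (Suc p * (2 * g + 1) + 1) * (Suc p * (2 * g + 1))"
          unfolding S_def sum2 d by simp
        have Sp: "2 * S p + 2 * p = Suc p * p" using sum2[of p] unfolding S_def by (cases p) auto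
        have e1: "(S p + p + p * ((h - 1) * m)) + S (N - m + 1) = m\<^sup>2 * n * (n - 1) div 2"
        proof -
          have "2 * ((S p + p + p * ((h - 1) * m)) + S (N - m + 1)) = 2 * (m\<^sup>2 * h * (2 * g + 1))"
            using Sd Sp unfolding mp hg by (simp add: algebra_simps power2_eq_square)
          hence "(S p + p + p * ((h - 1) * m)) + S (N - m + 1) = m\<^sup>2 * h * (2 * g + 1)" by simp
          moreover have "m\<^sup>2 * n * (n - 1) = 2 * (m\<^sup>2 * h * (2 * g + 1))" unfolding n2 hg by (simp add: algebra_simps)
          ultimately show ?thesis by simp
        qed
        have s1: "even ((m - 1) * (N - m + 1) + p)"
          unfolding d unfolding mp by (simp add: algebra_simps)
        have s2: "even (n * m * (m - 1) div 2)"
          unfolding n2 by (simp add: mult.assoc) blast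
        have sgn: "(-1::rat) ^ ((m - 1) * (N - m + 1) + p) = (-1) ^ (n * m * (m - 1) div 2)"
          using s1 s2 by simp
        show ?thesis unfolding dM blk dY nd Let_def using mdvd
          by (simp only: if_True, subst sgn[symmetric], subst e1[symmetric]) (simp only: S_def power_add mult_ac)
      next
        case False2: False
        then obtain h where n2: "n = 2 * h + 1" using oddE by blast
        have N2: "N = 2 * m * h + m" using N n2 by (simp add: algebra_simps)
        have Y: "mat (m - 1) (m - 1) (\<lambda>(i,j). Mpf x m i (j + (N - m + 1))) =
           mat (m - 1) (m - 1) (\<lambda>(i,j). if i + j + 1 = m - 1 then x ^ (h * m) else 0)"
          by (rule eq_matI) (use Y_odd[OF m N2] in \<open>auto simp: mp\<close>)
        have dY: "det (mat (m - 1) (m - 1) (\<lambda>(i,j). Mpf x m i (j + (N - m + 1)))) =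
            (-1) ^ ((m - 1) * (m - 1 - 1) div 2) * x ^ (h * m * (m - 1))"
          unfolding Y det_antidiag power_mult[symmetric] ..
        define S where "S n = (\<Sum>i<n. i)" for n :: nat
        have d: "N - m + 1 = 2 * m * h + 1" unfolding N2 by simp
        have Sd: "2 * S (N - m + 1) = (2 * m * h + 1) * (2 * m * h)"
          unfolding S_def sum2 d by simp
        have e1: "h * m * (m - 1) + S (N - m + 1) = m\<^sup>2 * n * (n - 1) div 2"
        proof -
          have "2 * (h * m * (m - 1) + S (N - m + 1)) = 2 * (m\<^sup>2 * n * h)"
            using Sd unfolding mp n2 by (simp add: algebra_simps power2_eq_square)
          hence A: "h * m * (m - 1) + S (N - m + 1) = m\<^sup>2 * n * h" by simp
          have X: "m\<^sup>2 * n * (n - 1) = 2 * (m\<^sup>2 * n * h)" unfolding n2 by (simp add: algebra_simps)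
          have "m\<^sup>2 * n * (n - 1) div 2 = m\<^sup>2 * n * h" by (simp only: X)
          then show ?thesis using A by simp
        qed
        have Sm: "2 * S m = m * (m - 1)" unfolding S_def by (rule sum2)
        have Sm1: "(m - 1) * (m - 1 - 1) div 2 + (m - 1) = S m"
        proof -
          have "2 * S p = p * (p - 1)" unfolding S_def by (rule sum2)
          moreover have "S m = S p + p" unfolding S_def mp by simp
          ultimately show ?thesis unfolding mp by simp
        qed
        have A1: "(m - 1) * (N - m + 1) + (m - 1) * (m - 1 - 1) div 2 = S m + 2 * (m * h * (m - 1))"
        proof -
          have pm1: "m - 1 = p" unfolding mp by simp
          have "p * (N - m + 1) = 2 * (m * h * p) + p" unfolding d by (simp add: algebra_simps)
          thus ?thesis using Sm1 unfolding pm1 by linarith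
        qed
        have A2: "n * m * (m - 1) div 2 = S m + 2 * (h * S m)"
        proof -
          have "n * m * (m - 1) = (2 * h + 1) * (2 * S m)" unfolding n2 Sm by (simp only: mult.assoc)
          hence "n * m * (m - 1) = 2 * (S m + 2 * (h * S m))" by (simp add: algebra_simps)
          thus ?thesis by simp
        qed
        have s: "even ((m - 1) * (N - m + 1) + (m - 1) * (m - 1 - 1) div 2) = even (n * m * (m - 1) div 2)"
          unfolding A1 A2 by simp
        have sgn: "(-1::rat) ^ ((m - 1) * (N - m + 1) + (m - 1) * (m - 1 - 1) div 2) = (-1) ^ (n * m * (m - 1) div 2)"
          unfolding neg1_pow s ..
        show ?thesis unfolding dM blk dY nd Let_def using mdvd
          by (simp only: if_True, subst sgn[symmetric], subst e1[symmetric]) (simp only: S_def power_add mult_ac)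
      qed
    qed
  qed
qed

lemma poly_sum_N:
  assumes "degree p < N"
  shows "poly p (y :: 'a :: comm_ring_1) = (\<Sum>a<N. coeff p a * y ^ a)"
proof -
  have "poly p y = (\<Sum>a\<le>degree p. coeff p a * y ^ a)" by (rule poly_altdef)
  also have "\<dots> = (\<Sum>a<N. coeff p a * y ^ a)"
    using assms by (intro sum.mono_neutral_left) (auto simp: coeff_eq_0)
  finally show ?thesis .
qed

lemma Ev_sum:
  assumes "degree p < N"
  shows "Ev p = (\<Sum>a<N. fls_const (coeff p a) * fls_X_inv ^ a)"
proof -
  have d: "degree (map_poly fls_const p) = degree p"
    by (rule degree_map_poly) simp
  show ?thesis unfolding Ev_def using assms
    by (subst poly_sum_N[of _ N]) (simp_all add: d coeff_map_poly)
qed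

lemma Lf_lin: "Lf x m (\<Sum>a\<in>A. fls_const (c a) * g a) = (\<Sum>a\<in>A. c a * Lf x m (g a))"
  unfolding Lf_def fls_residue_def
  by (simp add: sum_distrib_right fls_nth_sum mult.assoc)

lemma Lf_bil:
  assumes "degree p < N" "degree q < N"
  shows "Lf x m (Ev p * Ev q) = (\<Sum>a<N. \<Sum>b<N. coeff p a * Lf x m (fls_X_inv ^ (a + b)) * coeff q b)"
proof -
  have "Ev p * Ev q = (\<Sum>a<N. \<Sum>b<N. fls_const (coeff p a * coeff q b) * fls_X_inv ^ (a + b))"
    unfolding Ev_sum[OF assms(1)] Ev_sum[OF assms(2)] sum_product
    by (intro sum.cong refl) (simp add: power_add mult_ac)
  also have "\<dots> = (\<Sum>(a,b)\<in>{..<N} \<times> {..<N}. fls_const (coeff p a * coeff q b) * fls_X_inv ^ (a + b))"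
    by (simp add: sum.cartesian_product)
  finally have "Lf x m (Ev p * Ev q) = (\<Sum>(a,b)\<in>{..<N} \<times> {..<N}. (coeff p a * coeff q b) * Lf x m (fls_X_inv ^ (a + b)))"
    using Lf_lin[of x m "\<lambda>(a,b). coeff p a * coeff q b" "\<lambda>(a,b). fls_X_inv ^ (a + b)" "{..<N} \<times> {..<N}"]
    by (simp add: case_prod_unfold)
  also have "\<dots> = (\<Sum>a<N. \<Sum>b<N. coeff p a * Lf x m (fls_X_inv ^ (a + b)) * coeff q b)"
    by (simp add: sum.cartesian_product mult_ac)
  finally show ?thesis .
qed

lemma basis_change:
  assumes P: "\<And>i. i < N \<Longrightarrow> degree (P i) \<le> i \<and> coeff (P i) i = 1"
    and Q: "\<And>i. i < N \<Longrightarrow> degree (Q i) \<le> i \<and> coeff (Q i) i = 1"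
  shows "det (mat N N (\<lambda>(i,j). Lf x m (fls_X_inv ^ (i + j)))) =
         det (mat N N (\<lambda>(i,j). Lf x m (Ev (P i) * Ev (Q j))))"
proof -
  define A where "A = mat N N (\<lambda>(i,a). coeff (P i) a)"
  define B where "B = mat N N (\<lambda>(b,j). coeff (Q j) b)"
  define H where "H = mat N N (\<lambda>(i,j). Lf x m (fls_X_inv ^ (i + j)))"
  have cA: "A \<in> carrier_mat N N" and cB: "B \<in> carrier_mat N N" and cH: "H \<in> carrier_mat N N"
    unfolding A_def B_def H_def by auto
  have dA: "det A = 1"
  proof -
    have "det A = prod_list (diag_mat A)"
    proof (rule det_lower_triangular[OF _ cA])
      fix i j assume ij: "i < j" "j < N"
      hence "degree (P i) < j" using P[of i] by fastforce
      thus "A $$ (i, j) = 0" using ij by (simp add: A_def coeff_eq_0)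
    qed
    also have "\<dots> = 1" unfolding prod_list_diag_prod using P by (simp add: A_def)
    finally show ?thesis .
  qed
  have dB: "det B = 1"
  proof -
    have "det B = prod_list (diag_mat B)"
    proof (rule det_upper_triangular[OF _ cB])
      show "upper_triangular B" unfolding upper_triangular_def
      proof (intro allI impI)
        fix i j assume ij: "i < dim_row B" "j < i"
        hence i: "i < N" using cB by auto
        hence "degree (Q j) < i" using Q[of j] ij by fastforce
        thus "B $$ (i, j) = 0" using ij i by (simp add: B_def coeff_eq_0)
      qed
    qed
    also have "\<dots> = 1" unfolding prod_list_diag_prod using Q by (simp add: B_def)
    finally show ?thesis .
  qed
  have "A * H * B = mat N N (\<lambda>(i,j). Lf x m (Ev (P i) * Ev (Q j)))"
  proof (rule eq_matI)
    fix i j assume "i < dim_row (mat N N (\<lambda>(i,j). Lf x m (Ev (P i) * Ev (Q j))))"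
      "j < dim_col (mat N N (\<lambda>(i,j). Lf x m (Ev (P i) * Ev (Q j))))"
    hence i: "i < N" and j: "j < N" by auto
    have dP: "degree (P i) < N" using P[OF i] i by linarith
    have dQ: "degree (Q j) < N" using Q[OF j] j by linarith
    have "(A * H * B) $$ (i, j) = (\<Sum>b<N. (\<Sum>a<N. coeff (P i) a * Lf x m (fls_X_inv ^ (a + b))) * coeff (Q j) b)"
      using i j cA cH cB by (simp add: A_def B_def H_def scalar_prod_def lessThan_atLeast0)
    also have "\<dots> = (\<Sum>a<N. \<Sum>b<N. coeff (P i) a * Lf x m (fls_X_inv ^ (a + b)) * coeff (Q j) b)"
      by (simp add: sum_distrib_right) (rule sum.swap)
    also have "\<dots> = Lf x m (Ev (P i) * Ev (Q j))" by (rule Lf_bil[OF dP dQ, symmetric])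
    finally show "(A * H * B) $$ (i, j) = mat N N (\<lambda>(i,j). Lf x m (Ev (P i) * Ev (Q j))) $$ (i, j)"
      using i j by simp
  qed (auto simp: A_def B_def H_def)
  hence "det (mat N N (\<lambda>(i,j). Lf x m (Ev (P i) * Ev (Q j)))) = det A * det H * det B"
    using cA cB cH by (metis det_mult mult_carrier_mat)
  thus ?thesis using dA dB unfolding H_def by simp
qed

lemma yp_mult: "yp x * p = pCons 0 p - smult (1 + x) p"
proof -
  have "yp x * p = smult (-(1+x)) p + pCons 0 ([:1:] * p)" unfolding yp_def by (rule mult_pCons_left)
  also have "smult (-(1+x)) p = - smult (1+x) p" by (rule smult_minus_left)
  also have "[:1:] * p = p" by (simp add: one_pCons[symmetric])
  finally show ?thesis by simp
qed

lemma yp_deg: "degree (yp x) = 1" "coeff (yp x) 1 = 1" by (simp_all add: yp_def)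

lemma pp_monic: "degree (pp x n) \<le> n \<and> coeff (pp x n) n = 1"
proof (induction x n rule: pp.induct)
  case (1 x) then show ?case by simp
next
  case (2 x) then show ?case using yp_deg[of x] by simp
next
  case (3 x n)
  have e: "pp x (Suc (Suc n)) = pCons 0 (pp x (Suc n)) - smult (1 + x) (pp x (Suc n)) - smult x (pp x n)"
    by (simp add: yp_mult)
  have d1: "degree (pCons 0 (pp x (Suc n))) \<le> Suc (Suc n)"
    using 3(1) degree_pCons_le[of 0 "pp x (Suc n)"] by linarith
  have d2: "degree (smult (1 + x) (pp x (Suc n))) \<le> Suc (Suc n)"
    using 3(1) degree_smult_le[of "1 + x" "pp x (Suc n)"] by linarith
  have d3: "degree (smult x (pp x n)) \<le> Suc (Suc n)"
    using 3(2) degree_smult_le[of x "pp x n"] by linarith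
  have "degree (pp x (Suc (Suc n))) \<le> Suc (Suc n)"
    unfolding e by (intro degree_diff_le d1 d2 d3)
  moreover have "coeff (pp x (Suc (Suc n))) (Suc (Suc n)) = 1"
    unfolding e using 3 by (simp add: coeff_eq_0)
  ultimately show ?case by simp
qed

lemma tt_monic: "degree (tt x n) \<le> n \<and> (n \<ge> 1 \<longrightarrow> coeff (tt x n) n = 1)"
proof (induction x n rule: tt.induct)
  case (1 x) then show ?case by simp
next
  case (2 x) then show ?case using yp_deg[of x] by simp
next
  case (3 x n)
  have e: "tt x (Suc (Suc n)) = pCons 0 (tt x (Suc n)) - smult (1 + x) (tt x (Suc n)) - smult x (tt x n)"
    by (simp add: yp_mult)
  have d1: "degree (pCons 0 (tt x (Suc n))) \<le> Suc (Suc n)"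
    using 3(1) degree_pCons_le[of 0 "tt x (Suc n)"] by linarith
  have d2: "degree (smult (1 + x) (tt x (Suc n))) \<le> Suc (Suc n)"
    using 3(1) degree_smult_le[of "1 + x" "tt x (Suc n)"] by linarith
  have d3: "degree (smult x (tt x n)) \<le> Suc (Suc n)"
    using 3(2) degree_smult_le[of x "tt x n"] by linarith
  have "degree (tt x (Suc (Suc n))) \<le> Suc (Suc n)"
    unfolding e by (intro degree_diff_le d1 d2 d3)
  moreover have "coeff (tt x (Suc (Suc n))) (Suc (Suc n)) = 1"
    unfolding e using 3 by (simp add: coeff_eq_0)
  ultimately show ?case by simp
qed

lemma rr_monic: "degree (rr x n) \<le> n \<and> coeff (rr x n) n = 1"
  using tt_monic[of x n] by (cases n) (auto simp: rr_def)

definition evf :: "rat \<Rightarrow> rat poly fps \<Rightarrow> rat fps" where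
  "evf x F = Abs_fps (\<lambda>n. poly (fps_nth F n) x)"

lemma evf_mult: "evf x (F * G) = evf x F * evf x G"
  by (rule fps_ext) (simp add: evf_def fps_mult_nth poly_sum)

lemma evf_1: "evf x 1 = 1"
  by (rule fps_ext) (simp add: evf_def)

lemma evf_power: "evf x (F ^ k) = (evf x F) ^ k"
  by (induction k) (simp_all add: evf_1 evf_mult)

lemma G_eval: "evf x G_fps = fps_shift 1 (Vs x)"
proof (rule fps_ext)
  fix n
  have "fps_nth (evf x G_fps) n = poly (narayana (n + 1)) x"
    by (simp add: evf_def G_fps_def narayana_fps_def)
  also have "\<dots> = fps_nth (Vs x) (n + 1)" by (rule Vs_coeff[symmetric]) simp
  finally show "fps_nth (evf x G_fps) n = fps_nth (fps_shift 1 (Vs x)) n" by simp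
qed

lemma V_shift: "Vs x = fps_X * fps_shift 1 (Vs x)"
  by (rule fps_ext) (simp add: fps_X_mult_nth Vs_0)

lemma Vm_nth: "fps_nth ((Vs x) ^ m) k = (if k < m then 0 else fps_nth ((fps_shift 1 (Vs x)) ^ m) (k - m))"
proof -
  have "(Vs x) ^ m = fps_X ^ m * (fps_shift 1 (Vs x)) ^ m"
    by (subst V_shift) (simp add: power_mult_distrib)
  thus ?thesis by (simp add: fps_X_power_mult_nth)
qed

lemma gamma_eval: "poly (gamma2m m (int i + int j + 1 - int m)) x = fps_nth (Vs x ^ m) (i + j + 1)"
proof (cases "int i + int j + 1 - int m < 0")
  case True
  then show ?thesis by (simp add: gamma2m_def Vm_nth)
next
  case False
  have n: "nat (int i + int j + 1 - int m) = i + j + 1 - m" using False by simp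
  have "poly (gamma2m m (int i + int j + 1 - int m)) x = fps_nth (evf x (G_fps ^ m)) (i + j + 1 - m)"
    using False by (simp add: gamma2m_def n evf_def)
  also have "\<dots> = fps_nth (Vs x ^ m) (i + j + 1)"
    using False by (simp add: evf_power G_eval Vm_nth)
  finally show ?thesis .
qed

lemma hankel_eval: "poly (hankel m N) x = det (mat N N (\<lambda>(i,j). Lf x m (fls_X_inv ^ (i + j))))"
proof -
  interpret h: comm_ring_hom "\<lambda>p. poly p x"
    by unfold_locales (simp_all add: poly_mult)
  have "poly (hankel m N) x = det (map_mat (\<lambda>p. poly p x) (mat N N (\<lambda>(i, j). gamma2m m (int i + int j + 1 - int m))))"
    unfolding hankel_def by (rule h.hom_det[symmetric])
  also have "map_mat (\<lambda>p. poly p x) (mat N N (\<lambda>(i, j). gamma2m m (int i + int j + 1 - int m)))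
     = mat N N (\<lambda>(i,j). Lf x m (fls_X_inv ^ (i + j)))"
    by (rule eq_matI) (auto simp: gamma_eval Lf_moment)
  finally show ?thesis .
qed

theorem theorem1p5:
  fixes m N :: nat
  assumes "m \<ge> 1"
  shows "hankel m N =
    (if m dvd N then
       (let n = N div m in
          (-1) ^ (n * m * (m - 1) div 2) * monom 1 (m\<^sup>2 * n * (n - 1) div 2))
     else 0)"
proof -
  have "poly (hankel m N) x = poly (if m dvd N then
       (let n = N div m in
          (-1) ^ (n * m * (m - 1) div 2) * monom 1 (m\<^sup>2 * n * (n - 1) div 2))
     else 0) x" for x
  proof -
    have "poly (hankel m N) x = det (mat N N (\<lambda>(i,j). Lf x m (fls_X_inv ^ (i + j))))"
      by (rule hankel_eval)
    also have "\<dots> = det (mat N N (\<lambda>(i,j). Lf x m (Ev (pp x i) * Ev (rr x j))))"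
      by (rule basis_change) (simp_all add: pp_monic rr_monic)
    also have "mat N N (\<lambda>(i,j). Lf x m (Ev (pp x i) * Ev (rr x j))) = mat N N (\<lambda>(i,j). Mf x m (Suc i) j)"
      by (rule eq_matI) (auto simp: entry[OF assms])
    also have "det \<dots> = (if m dvd N then (let n = N div m in (-1) ^ (n * m * (m - 1) div 2) * x ^ (m\<^sup>2 * n * (n - 1) div 2)) else 0)"
      by (rule det_M_main[OF assms])
    also have "\<dots> = poly (if m dvd N then
       (let n = N div m in
          (-1) ^ (n * m * (m - 1) div 2) * monom 1 (m\<^sup>2 * n * (n - 1) div 2))
     else 0) x"
      by (simp add: Let_def poly_monom)
    finally show ?thesis .
  qed
  thus ?thesis using poly_eq_poly_eq_iff by blast
qed

end
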